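(* The set $\{2,3\}$ is not a $\delta$-set.
   Context: All graphs are finite and simple; $d(u,v)$ denotes the usual graph distance (infinite between different components). For a set $J$ of nonnegative integers, a distance $J$-labeling of $G$ is a function $f:V(G)\to J$ with $f(V(G))=J$ such that whenever two distinct vertices $u,v$ satisfy $f(u)=f(v)=k$, we have $d(u,v)=k$. It is proper if every $k\in J\setminus\{0\}$ is the label of at least two vertices. A finite set $\Sigma$ of nonnegative integers is a $\delta$-set if there exists a graph admitting a proper distance $\Sigma$-labeling. *)

theory Defs
  imports Main "HOL-Library.Extended_Nat"
begin

definition simple_graph :: "'a set \<Rightarrow> ('a \<Rightarrow> 'a \<Rightarrow> bool) \<Rightarrow> bool" where
  "simple_graph V E \<longleftrightarrow> finite V \<and> (\<forall>u v. E u v \<longrightarrow> u \<in> V \<and> v \<in> V)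
     \<and> (\<forall>u v. E u v \<longrightarrow> E v u) \<and> (\<forall>u. \<not> E u u)"

definition gdist :: "('a \<Rightarrow> 'a \<Rightarrow> bool) \<Rightarrow> 'a \<Rightarrow> 'a \<Rightarrow> enat" where
  "gdist E u v = (INF n \<in> {n. (u, v) \<in> {(x, y). E x y} ^^ n}. enat n)"

definition distance_labeling ::
  "'a set \<Rightarrow> ('a \<Rightarrow> 'a \<Rightarrow> bool) \<Rightarrow> nat set \<Rightarrow> ('a \<Rightarrow> nat) \<Rightarrow> bool" where
  "distance_labeling V E J f \<longleftrightarrow> f ` V = J \<and>
     (\<forall>u\<in>V. \<forall>v\<in>V. u \<noteq> v \<and> f u = f v \<longrightarrow> gdist E u v = enat (f u))"

definition proper_distance_labeling ::
  "'a set \<Rightarrow> ('a \<Rightarrow> 'a \<Rightarrow> bool) \<Rightarrow> nat set \<Rightarrow> ('a \<Rightarrow> nat) \<Rightarrow> bool" where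
  "proper_distance_labeling V E J f \<longleftrightarrow> distance_labeling V E J f \<and>
     (\<forall>k \<in> J - {0}. \<exists>u\<in>V. \<exists>v\<in>V. u \<noteq> v \<and> f u = k \<and> f v = k)"

text \<open>Since every finite graph is isomorphic to one on any infinite vertex type,
  delta-sets are exactly the sets with delta_set_on (UNIV::nat set) \<Sigma>.\<close>
definition delta_set_on :: "'a itself \<Rightarrow> nat set \<Rightarrow> bool" where
  "delta_set_on _ \<Sigma> \<longleftrightarrow> finite \<Sigma> \<and>
     (\<exists>(V::'a set) E f. simple_graph V E \<and> proper_distance_labeling V E \<Sigma> f)"

end

theory Submission
  imports Defs
begin

lemma gdist_edge:
  assumes "E u v" shows "gdist E u v \<le> enat 1"
proof -
  have "(u, v) \<in> {(x, y). E x y} ^^ 1" using assms by simp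
  then show ?thesis unfolding gdist_def by (rule INF_lower[where f=enat, OF CollectI])
qed

lemma gdist_eq:
  assumes "gdist E u v = enat k" shows "(u, v) \<in> {(x, y). E x y} ^^ k"
proof -
  let ?N = "{n. (u, v) \<in> {(x, y). E x y} ^^ n}"
  show ?thesis
  proof (cases "?N = {}")
    case True
    then have "gdist E u v = \<infinity>" unfolding gdist_def by (simp add: top_enat_def)
    with assms show ?thesis by simp
  next
    case False
    then obtain n0 where n0: "n0 \<in> ?N" by blast
    define m where "m = (LEAST n. n \<in> ?N)"
    have mN: "m \<in> ?N" unfolding m_def using n0 by (rule LeastI)
    have "gdist E u v = enat m"
    proof (rule antisym)
      show "gdist E u v \<le> enat m" unfolding gdist_def by (rule INF_lower[OF mN])
      show "enat m \<le> gdist E u v" unfolding gdist_def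
        by (rule INF_greatest) (simp add: m_def Least_le)
    qed
    with assms mN show ?thesis by simp
  qed
qed

theorem mainTheorem10:
  shows "\<not> delta_set_on TYPE('a) {2, 3}"
proof
  assume "delta_set_on TYPE('a) {2, 3}"
  then obtain V :: "'a set" and E f where g: "simple_graph V E"
    and p: "proper_distance_labeling V E {2,3} f"
    unfolding delta_set_on_def by blast
  from p obtain a b where ab: "a \<in> V" "b \<in> V" "a \<noteq> b" "f a = 3" "f b = 3"
    unfolding proper_distance_labeling_def by force
  from p have img: "f ` V = {2,3}"
    and dl: "\<And>u v. u\<in>V \<Longrightarrow> v\<in>V \<Longrightarrow> u \<noteq> v \<Longrightarrow> f u = f v \<Longrightarrow> gdist E u v = enat (f u)"
    unfolding proper_distance_labeling_def distance_labeling_def by auto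
  have edge: "f x \<noteq> f y" if "E x y" for x y
  proof
    assume eq: "f x = f y"
    have xy: "x \<in> V" "y \<in> V" "x \<noteq> y" using g that unfolding simple_graph_def by metis+
    have "f x \<in> {2,3}" using img xy by auto
    moreover have "gdist E x y = enat (f x)" using dl xy eq by blast
    moreover have "gdist E x y \<le> enat 1" by (rule gdist_edge[of E x y, OF that])
    ultimately show False by auto
  qed
  have lab: "f x \<in> {2,3}" if "E x y" for x y
    using g that img unfolding simple_graph_def by blast
  have lab2: "f y \<in> {2,3}" if "E x y" for x y
    using g that img unfolding simple_graph_def by blast
  have "gdist E a b = enat 3" using dl ab by simp
  then have "(a, b) \<in> {(x, y). E x y} ^^ 3" by (rule gdist_eq)
  then have "(a, b) \<in> {(x, y). E x y} ^^ Suc (Suc (Suc 0))" unfolding numeral_3_eq_3 .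
  then obtain x where ax: "(a, x) \<in> {(x, y). E x y}" and xb: "(x, b) \<in> {(x, y). E x y} ^^ Suc (Suc 0)"
    using relpow_Suc_D2 by metis
  from xb obtain y where xy: "(x, y) \<in> {(x, y). E x y}" and yb: "(y, b) \<in> {(x, y). E x y} ^^ Suc 0"
    using relpow_Suc_D2 by metis
  have e1: "E a x" using ax by simp
  have e2: "E x y" using xy by simp
  have e3: "E y b" using yb by simp
  have "f x = 2" using edge[OF e1] lab2[OF e1] ab(4) by auto
  moreover have "f y \<in> {2,3}" using lab2[OF e2] .
  moreover have "f y \<noteq> f x" using edge[OF e2] by simp
  moreover have "f y \<noteq> 3" using edge[OF e3] ab(5) by simp
  ultimately show False by auto
qed

end
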